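(* Let $(G,S,\mathcal{P},k)$ be an instance of \textsc{Pair-Constrained Edge Subset Feedback Vertex Set} with $G=(V,E)$. Let $Z\subseteq V\setminus V(S)$ be such that $G-Z$ contains no $S$-cycle, and let $Y$ be a set with $Z\subseteq Y\subseteq V\setminus V(S)$ (hence $G-Y$ contains no $S$-cycle). Let $e=\{I,J\}$ be an edge of $H_Y$ such that $e$ sees no single vertex of $Y$ and every pair $\{x,y\}$ with $x,y\in Y$ seen by $e$ belongs to $\mathcal{P}$. Then $e_S$ is irrelevant for $(G,S,\mathcal{P},k)$.
   Context: Graphs are finite, undirected, may contain loops and parallel edges; an $S$-cycle is a cycle containing an edge of $S$; $V(S)$ is the set of endpoints of edges of $S$. An instance $(G,S,\mathcal{P},k)$ of \textsc{Pair-Constrained Edge Subset Feedback Vertex Set} consists of a graph $G=(V,E)$, $S\subseteq E$, a set $\mathcal{P}$ of unordered pairs of distinct vertices (pair-constraints), and $k\in\mathbb{N}$; a solution is $X\subseteq V$ with $|X|\le k$ such that $G-X$ contains no $S$-cycle and $X\cap\{x,y\}\neq\emptyset$ for every $\{x,y\}\in\mathcal{P}$. An edge $f\in S$ is irrelevant for $(G,S,\mathcal{P},k)$ if for every $X\subseteq V$: $X$ is a solution for $(G,S,\mathcal{P},k)$ iff $X$ is a solution for $(G,S\setminus\{f\},\mathcal{P},k)$. Bubbles: the connected components of $G-Y-S$ (delete the vertices of $Y$ and the edges of $S$); $V_I$ denotes the vertex set of bubble $I$. $H_Y$ is the graph whose vertices are the bubbles, with bubbles $I,J$ adjacent iff some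 edge of $S$ joins $V_I$ and $V_J$; since $G-Y$ has no $S$-cycle, for adjacent $I,J$ there is exactly one such edge, denoted $e_S$ for $e=\{I,J\}$. $H_Y^+$ is obtained from $H_Y$ by adding the vertices of $Y$ and an edge $\{y,I\}$ whenever $y\in Y$ is adjacent in $G$ to a vertex of $V_I$. An edge $e=\{I,J\}$ of $H_Y$ sees a vertex $y\in Y$ if $\{I,y\},\{J,y\}\in E(H_Y^+)$, and sees a pair $\{x,y\}$ of distinct $x,y\in Y$ if $\{I,x\},\{J,y\}\in E(H_Y^+)$ or $\{I,y\},\{J,x\}\in E(H_Y^+)$. *)

theory Defs
  imports Main
begin

text \<open>Multigraphs (loops and parallel edges allowed): a vertex set V, an edge set E of
edge identifiers, and an endpoint map ends; a loop has one endpoint, other edges two.\<close>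

definition multigraph :: "'v set \<Rightarrow> 'e set \<Rightarrow> ('e \<Rightarrow> 'v set) \<Rightarrow> bool" where
  "multigraph V E ends \<longleftrightarrow> finite V \<and> finite E \<and>
     (\<forall>e\<in>E. ends e \<subseteq> V \<and> (card (ends e) = 1 \<or> card (ends e) = 2))"

text \<open>A cycle: vertices v0..v(n-1) pairwise distinct, edges e0..e(n-1) pairwise distinct,
n >= 1, edge ei joins vi and v(i+1 mod n). (n = 1: a loop; n = 2: two parallel edges.)\<close>
definition is_cycle :: "'v set \<Rightarrow> 'e set \<Rightarrow> ('e \<Rightarrow> 'v set) \<Rightarrow> 'v list \<Rightarrow> 'e list \<Rightarrow> bool" where
  "is_cycle V E ends vs es \<longleftrightarrow> 1 \<le> length vs \<and> length es = length vs \<and>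
     distinct vs \<and> distinct es \<and> set vs \<subseteq> V \<and> set es \<subseteq> E \<and>
     (\<forall>i<length vs. ends (es ! i) = {vs ! i, vs ! (Suc i mod length vs)})"

definition has_S_cycle_minus :: "'v set \<Rightarrow> 'e set \<Rightarrow> ('e \<Rightarrow> 'v set) \<Rightarrow> 'e set \<Rightarrow> 'v set \<Rightarrow> bool" where
  "has_S_cycle_minus V E ends S X \<longleftrightarrow>
     (\<exists>vs es. is_cycle (V - X) {e\<in>E. ends e \<inter> X = {}} ends vs es \<and> set es \<inter> S \<noteq> {})"

definition VS :: "('e \<Rightarrow> 'v set) \<Rightarrow> 'e set \<Rightarrow> 'v set" where
  "VS ends S = (\<Union>e\<in>S. ends e)"

definition pcesfvs_instance :: "'v set \<Rightarrow> 'e set \<Rightarrow> ('e \<Rightarrow> 'v set) \<Rightarrow> 'e set \<Rightarrow> 'v set set \<Rightarrow> nat \<Rightarrow> bool" where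
  "pcesfvs_instance V E ends S P k \<longleftrightarrow> multigraph V E ends \<and> S \<subseteq> E \<and>
     (\<forall>p\<in>P. \<exists>x y. x \<in> V \<and> y \<in> V \<and> x \<noteq> y \<and> p = {x, y})"

definition is_solution :: "'v set \<Rightarrow> 'e set \<Rightarrow> ('e \<Rightarrow> 'v set) \<Rightarrow> 'e set \<Rightarrow> 'v set set \<Rightarrow> nat \<Rightarrow> 'v set \<Rightarrow> bool" where
  "is_solution V E ends S P k X \<longleftrightarrow> X \<subseteq> V \<and> card X \<le> k \<and>
     \<not> has_S_cycle_minus V E ends S X \<and> (\<forall>p\<in>P. X \<inter> p \<noteq> {})"

definition irrelevant :: "'v set \<Rightarrow> 'e set \<Rightarrow> ('e \<Rightarrow> 'v set) \<Rightarrow> 'e set \<Rightarrow> 'v set set \<Rightarrow> nat \<Rightarrow> 'e \<Rightarrow> bool" where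
  "irrelevant V E ends S P k f \<longleftrightarrow> f \<in> S \<and>
     (\<forall>X. X \<subseteq> V \<longrightarrow> (is_solution V E ends S P k X \<longleftrightarrow> is_solution V E ends (S - {f}) P k X))"

definition bubble_adj :: "'e set \<Rightarrow> ('e \<Rightarrow> 'v set) \<Rightarrow> 'e set \<Rightarrow> 'v set \<Rightarrow> 'v \<Rightarrow> 'v \<Rightarrow> bool" where
  "bubble_adj E ends S Y u v \<longleftrightarrow> (\<exists>e\<in>E - S. ends e \<inter> Y = {} \<and> ends e = {u, v})"

definition bubble_of :: "'e set \<Rightarrow> ('e \<Rightarrow> 'v set) \<Rightarrow> 'e set \<Rightarrow> 'v set \<Rightarrow> 'v \<Rightarrow> 'v set" where
  "bubble_of E ends S Y u = {v. (u, v) \<in> {(a, b). bubble_adj E ends S Y a b}\<^sup>*}"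

text \<open>Bubbles: connected components of G - Y - S (vertex sets).\<close>
definition is_bubble :: "'v set \<Rightarrow> 'e set \<Rightarrow> ('e \<Rightarrow> 'v set) \<Rightarrow> 'e set \<Rightarrow> 'v set \<Rightarrow> 'v set \<Rightarrow> bool" where
  "is_bubble V E ends S Y I \<longleftrightarrow> (\<exists>u\<in>V - Y. I = bubble_of E ends S Y u)"

definition H_edge :: "'v set \<Rightarrow> 'e set \<Rightarrow> ('e \<Rightarrow> 'v set) \<Rightarrow> 'e set \<Rightarrow> 'v set \<Rightarrow> 'v set \<Rightarrow> 'v set \<Rightarrow> bool" where
  "H_edge V E ends S Y I J \<longleftrightarrow> is_bubble V E ends S Y I \<and> is_bubble V E ends S Y J \<and> I \<noteq> J \<and>
     (\<exists>f\<in>S. \<exists>a\<in>I. \<exists>b\<in>J. ends f = {a, b})"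

definition Hplus_adj :: "'e set \<Rightarrow> ('e \<Rightarrow> 'v set) \<Rightarrow> 'v \<Rightarrow> 'v set \<Rightarrow> bool" where
  "Hplus_adj E ends y I \<longleftrightarrow> (\<exists>e\<in>E. \<exists>u\<in>I. ends e = {y, u})"

definition sees_vertex :: "'e set \<Rightarrow> ('e \<Rightarrow> 'v set) \<Rightarrow> 'v set \<Rightarrow> 'v set \<Rightarrow> 'v \<Rightarrow> bool" where
  "sees_vertex E ends I J y \<longleftrightarrow> Hplus_adj E ends y I \<and> Hplus_adj E ends y J"

definition sees_pair :: "'e set \<Rightarrow> ('e \<Rightarrow> 'v set) \<Rightarrow> 'v set \<Rightarrow> 'v set \<Rightarrow> 'v \<Rightarrow> 'v \<Rightarrow> bool" where
  "sees_pair E ends I J x y \<longleftrightarrow> x \<noteq> y \<and>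
     ((Hplus_adj E ends x I \<and> Hplus_adj E ends y J) \<or> (Hplus_adj E ends y I \<and> Hplus_adj E ends x J))"

end

theory Submission imports Defs begin

lemma bubble_notY:
  assumes "u \<notin> Y" "x \<in> bubble_of E ends S Y u" shows "x \<notin> Y"
proof -
  have "(u, x) \<in> {(a, b). bubble_adj E ends S Y a b}\<^sup>*" using assms(2) by (simp add: bubble_of_def)
  then show ?thesis
  proof (induction rule: rtrancl_induct)
    case base then show ?case using assms(1) by simp
  next
    case (step y z) then show ?case by (auto simp: bubble_adj_def)
  qed
qed

lemma bubble_disj:
  assumes "x \<in> bubble_of E ends S Y u" "x \<in> bubble_of E ends S Y u'"
  shows "bubble_of E ends S Y u = bubble_of E ends S Y u'"
proof -
  let ?R = "{(a, b). bubble_adj E ends S Y a b}"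
  have sym: "sym (?R\<^sup>*)" by (rule sym_rtrancl) (auto simp: sym_def bubble_adj_def insert_commute)
  have 1: "(u, x) \<in> ?R\<^sup>*" "(u', x) \<in> ?R\<^sup>*" using assms by (auto simp: bubble_of_def)
  then have "(x, u') \<in> ?R\<^sup>*" using sym by (meson symD)
  then have a: "(u, u') \<in> ?R\<^sup>*" using 1 by (meson rtrancl_trans)
  then have b: "(u', u) \<in> ?R\<^sup>*" using sym by (meson symD)
  show ?thesis unfolding bubble_of_def using a b by (meson rtrancl_trans)
qed

lemma walk_Y:
  assumes B1: "B1 = bubble_of E ends S Y u" and u: "u \<notin> Y"
    and B2: "B2 = bubble_of E ends S Y u'"
    and ne: "B1 \<noteq> B2" and w0: "w 0 \<in> B1" and wm: "w m \<in> B2"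
    and edges: "\<forall>t<m. \<exists>g\<in>E-S. ends g = {w t, w (Suc t)}"
  shows "\<exists>t\<le>m. w t \<in> Y \<and> Hplus_adj E ends (w t) B1"
proof -
  have claim: "t \<le> m \<Longrightarrow> (\<forall>s\<le>t. w s \<notin> Y) \<Longrightarrow> w t \<in> B1" for t
  proof (induction t)
    case 0 then show ?case using w0 by simp
  next
    case (Suc t)
    then have wt: "w t \<in> B1" by simp
    obtain g where g: "g \<in> E - S" "ends g = {w t, w (Suc t)}" using edges Suc.prems Suc_le_lessD by blast
    have "w t \<notin> Y" "w (Suc t) \<notin> Y" using Suc.prems by auto
    then have "bubble_adj E ends S Y (w t) (w (Suc t))" using g unfolding bubble_adj_def by (intro bexI[of _ g]) auto
    then show ?case using wt B1 by (auto simp: bubble_of_def intro: rtrancl_into_rtrancl)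
  qed
  have w0Y: "w 0 \<notin> Y" using bubble_notY[OF u] w0 B1 by blast
  show ?thesis
  proof (cases "\<exists>t\<le>m. w t \<in> Y")
    case False
    then have "w m \<in> B1" using claim by auto
    then show ?thesis using bubble_disj[of "w m" E ends S Y u u'] B1 B2 wm ne by auto
  next
    case True
    then obtain t where t: "t \<le> m" "w t \<in> Y" by auto
    from ex_least_nat_less[of "\<lambda>t. w t \<in> Y" t] t w0Y
    obtain k where k: "k < t" "\<forall>i\<le>k. w i \<notin> Y" "w (Suc k) \<in> Y" by auto
    have wk: "w k \<in> B1" using claim k t by auto
    obtain g where g: "g \<in> E - S" "ends g = {w k, w (Suc k)}" using edges k t less_le_trans by blast
    have "Hplus_adj E ends (w (Suc k)) B1" unfolding Hplus_adj_def
      using g wk by (auto simp: insert_commute)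
    then show ?thesis using k t by (intro exI[of _ "Suc k"]) auto
  qed
qed


lemma mod_ne:
  fixes j t n :: nat
  assumes "j < n" "t < n - 1"
  shows "(Suc j + t) mod n \<noteq> j"
proof (cases "Suc j + t < n")
  case True then show ?thesis by simp
next
  case False
  then have "(Suc j + t) mod n = Suc j + t - n" using assms
    by (simp add: le_mod_geq)
  then show ?thesis using assms False by simp
qed

theorem lemma14:
  fixes V :: "'v set" and E :: "'e set" and ends :: "'e \<Rightarrow> 'v set"
    and S :: "'e set" and P :: "'v set set" and k :: nat
    and Z Y I J :: "'v set" and f :: 'e
  assumes inst: "pcesfvs_instance V E ends S P k"
    and Z_sub: "Z \<subseteq> V - VS ends S"
    and Z_noc: "\<not> has_S_cycle_minus V E ends S Z"
    and ZY: "Z \<subseteq> Y" and Y_sub: "Y \<subseteq> V - VS ends S"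
    and edge: "H_edge V E ends S Y I J"
    and no_vertex: "\<forall>y\<in>Y. \<not> sees_vertex E ends I J y"
    and pairs: "\<forall>x\<in>Y. \<forall>y\<in>Y. sees_pair E ends I J x y \<longrightarrow> {x, y} \<in> P"
    and f_S: "f \<in> S" and f_joins: "\<exists>a\<in>I. \<exists>b\<in>J. ends f = {a, b}"
  shows "irrelevant V E ends S P k f"
proof -
  obtain uI where uI: "uI \<in> V - Y" "I = bubble_of E ends S Y uI"
    using edge by (auto simp: H_edge_def is_bubble_def)
  obtain uJ where uJ: "uJ \<in> V - Y" "J = bubble_of E ends S Y uJ"
    using edge by (auto simp: H_edge_def is_bubble_def)
  have IJ: "I \<noteq> J" using edge by (simp add: H_edge_def)
  obtain a b where ab: "a \<in> I" "b \<in> J" "ends f = {a, b}" using f_joins by auto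
  have main: "\<not> has_S_cycle_minus V E ends S X"
    if nc: "\<not> has_S_cycle_minus V E ends (S - {f}) X" and pc: "\<forall>p\<in>P. X \<inter> p \<noteq> {}" for X
  proof
    assume "has_S_cycle_minus V E ends S X"
    then obtain vs es where cyc: "is_cycle (V - X) {e\<in>E. ends e \<inter> X = {}} ends vs es"
      and int: "set es \<inter> S \<noteq> {}" by (auto simp: has_S_cycle_minus_def)
    have onlyf: "g \<in> set es \<Longrightarrow> g \<in> S \<Longrightarrow> g = f" for g
      using nc cyc unfolding has_S_cycle_minus_def by blast
    define n where "n = length vs"
    have len: "length es = n" "1 \<le> n" "distinct es" "set vs \<subseteq> V - X"
      "set es \<subseteq> {e\<in>E. ends e \<inter> X = {}}"
      and ends_es: "\<forall>i<n. ends (es ! i) = {vs ! i, vs ! (Suc i mod n)}"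
      using cyc by (auto simp: is_cycle_def n_def)
    obtain j where j: "j < n" "es ! j = f"
      using int onlyf len by (metis disjoint_iff in_set_conv_nth)
    define w where "w t = vs ! ((Suc j + t) mod n)" for t
    define m where "m = n - 1"
    have w_in: "w t \<in> V - X" for t
    proof -
      have "(Suc j + t) mod n < n" using len by simp
      then have "w t \<in> set vs" unfolding w_def n_def by (simp add: n_def)
      then show ?thesis using len by blast
    qed
    have edges: "\<forall>t<m. \<exists>g\<in>E-S. ends g = {w t, w (Suc t)}"
    proof (intro allI impI)
      fix t assume t: "t < m"
      define i where "i = (Suc j + t) mod n"
      have i: "i < n" using len by (simp add: i_def)
      have ij: "i \<noteq> j" using mod_ne[of j n t] j t by (simp add: i_def m_def)
      have gne: "es ! i \<noteq> f" proof assume "es ! i = f" then have "es ! i = es ! j" using j by simp then show False using ij i j len nth_eq_iff_index_eq by blast qed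
      have gin: "es ! i \<in> set es" using i len by simp
      then have gE: "es ! i \<in> E" using len by auto
      have gS: "es ! i \<notin> S" using onlyf gin gne by blast
      have "ends (es ! i) = {w t, w (Suc t)}"
        using ends_es i by (simp add: w_def i_def mod_Suc_eq)
      then show "\<exists>g\<in>E-S. ends g = {w t, w (Suc t)}" using gE gS by blast
    qed
    have edges': "\<forall>t<m. \<exists>g\<in>E-S. ends g = {(\<lambda>t. w (m - t)) t, (\<lambda>t. w (m - t)) (Suc t)}"
    proof (intro allI impI)
      fix t assume t: "t < m"
      then obtain g where "g \<in> E - S" "ends g = {w (m - Suc t), w (Suc (m - Suc t))}"
        using edges[rule_format, of "m - Suc t"] t by auto
      moreover have "Suc (m - Suc t) = m - t" using t by simp
      ultimately show "\<exists>g\<in>E-S. ends g = {(\<lambda>t. w (m - t)) t, (\<lambda>t. w (m - t)) (Suc t)}"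
        by (auto simp: insert_commute)
    qed
    have w0: "w 0 = vs ! (Suc j mod n)" by (simp add: w_def)
    have wm: "w m = vs ! j" using j len
      by (simp add: w_def m_def)
    have "ends f = {w m, w 0}" using ends_es j w0 wm by auto
    then have cases: "(w 0 = a \<and> w m = b) \<or> (w 0 = b \<and> w m = a)" using ab
      by (auto simp: doubleton_eq_iff)
    have "\<exists>t1\<le>m. \<exists>t2\<le>m. w t1 \<in> Y \<and> w t2 \<in> Y \<and>
       Hplus_adj E ends (w t1) I \<and> Hplus_adj E ends (w t2) J"
    proof (cases "w 0 = a \<and> w m = b")
      case True
      obtain t1 where "t1 \<le> m" "w t1 \<in> Y" "Hplus_adj E ends (w t1) I"
        using walk_Y[OF uI(2) _ uJ(2) IJ, of w m] uI True ab edges by auto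
      moreover obtain t2 where "t2 \<le> m" "w (m - t2) \<in> Y" "Hplus_adj E ends (w (m - t2)) J"
        using walk_Y[OF uJ(2) _ uI(2) IJ[symmetric], of "\<lambda>t. w (m - t)" m] uJ True ab edges' by auto
      ultimately show ?thesis using diff_le_self by blast
    next
      case False
      then have F: "w 0 = b" "w m = a" using cases by auto
      obtain t1 where "t1 \<le> m" "w t1 \<in> Y" "Hplus_adj E ends (w t1) J"
        using walk_Y[OF uJ(2) _ uI(2) IJ[symmetric], of w m] uJ F ab edges by auto
      moreover obtain t2 where "t2 \<le> m" "w (m - t2) \<in> Y" "Hplus_adj E ends (w (m - t2)) I"
        using walk_Y[OF uI(2) _ uJ(2) IJ, of "\<lambda>t. w (m - t)" m] uI F ab edges' by auto
      ultimately show ?thesis using diff_le_self by blast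
    qed
    then obtain y1 y2 where y: "y1 \<in> Y" "y2 \<in> Y" "Hplus_adj E ends y1 I" "Hplus_adj E ends y2 J"
      "y1 \<in> V - X" "y2 \<in> V - X" using w_in by blast
    show False
    proof (cases "y1 = y2")
      case True then show False using no_vertex y by (auto simp: sees_vertex_def)
    next
      case False
      then have "sees_pair E ends I J y1 y2" using y by (simp add: sees_pair_def)
      then have "{y1, y2} \<in> P" using pairs y by blast
      then have "X \<inter> {y1, y2} \<noteq> {}" by (rule pc[rule_format])
      then show False using y(5,6) by auto
    qed
  qed
  have sub: "has_S_cycle_minus V E ends (S - {f}) X \<Longrightarrow> has_S_cycle_minus V E ends S X" for X
    unfolding has_S_cycle_minus_def by blast
  show ?thesis unfolding irrelevant_def is_solution_def using f_S main sub by blast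
qed

end
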